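(* Let $\mathcal{D}',\mathcal{D}''$ be two inputs of $\mathsf{SGDsub}$ that differ only in the user $Z_{1,1}$, run from the same initial point with the same parameters, step size $\eta$, and threshold $\varsigma=1/\tau$ in $\mathsf{RobustEst}$. Suppose $6\beta\eta B\le1$ and $(\mathcal{D}',\mathcal{D}'')$ is $(1/\tau)$-aligned. Then $|s_t(\mathcal{D}',\tau)-s_t(\mathcal{D}'',\tau)|\le 2$ for all $t\ge2$.
   Context: $\mathcal{X}\subset\mathbb{R}^d$ is an $\ell_\infty$-ball with Euclidean projection $\Pi_{\mathcal{X}}$. Each $f(\cdot;z)$ is convex, $\beta$-smooth ($\|\nabla^2 f(x;z)\|_\infty\le\beta$, $\|A\|_\infty=\max_i\sum_j|A_{ij}|$) with diagonally dominant Hessian ($|A_{ii}|\ge\sum_{j\ne i}|A_{ij}|$). Robust statistic: a coordinatewise map $(X_1,\dots,X_B)\mapsto X_{\mathrm{rs}}$ with (i) if more than $B/2$ of the $X_i$ lie in $B_\infty(X',\rho)$ then $X_{\mathrm{rs}}\in B_\infty(X',\rho)$; (ii) if $\|Y_i-X_i\|_\infty\le\Delta$ for all $i$ then $\|X_{\mathrm{rs}}-Y_{\mathrm{rs}}\|_\infty\le\Delta$; (iii) $(aX_i+b)_{\mathrm{rs}}=aX_{\mathrm{rs}}+b$. $\mathsf{RobustEst}(X_1,\dots,X_B;\varsigma)$: coordinatewise, output the projection of the mean $\bar x[j]$ onto $[X_{\mathrm{rs}}[j]-\varsigma,X_{\mathrm{rs}}[j]+\varsigma]$ if $|X_{\mathrm{rs}}[j]-\bar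 x[j]|\ge\varsigma$, else $\bar x[j]$. $\mathsf{SGDsub}$: users (sets of $m$ points) split into groups $\{Z_{i,t}\}_{t\in[T]}$, $i\in[B]$; $q_t(Z_{i,t})=\frac1m\sum_{z\in Z_{i,t}}\nabla f(x_{t-1};z)$, $g_{t-1}=\mathsf{RobustEst}(q_t(Z_{1,t}),\dots,q_t(Z_{B,t});\varsigma)$, $x_t=\Pi_{\mathcal{X}}(x_{t-1}-\eta g_{t-1})$. $s_t(\mathcal{D}',\tau)=\frac1B\sum_{i,j\in[B]}\exp(-\tau\|q_t(Z_{i,t})-q_t(Z_{j,t})\|_\infty)$, and $s_t(\mathcal{D}'',\tau)$ is the same with $q'_t$ computed along the trajectory $y_t$ of $\mathcal{D}''$. The pair is $\rho$-aligned if there are $X',Y'$ such that at least $2B/3$ of $q_1(Z_{i,1})$ lie in $B_\infty(X',\rho)$ and at least $2B/3$ of $q'_1(Z'_{i,1})$ lie in $B_\infty(Y',\rho)$. *)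

theory Defs
  imports "HOL-Analysis.Analysis"
begin

definition linf_ball :: "real ^ 'd \<Rightarrow> real \<Rightarrow> (real ^ 'd) set" where
  "linf_ball c r = {y. infnorm (y - c) \<le> r}"

definition mat_inf_norm :: "real ^ 'd ^ 'd \<Rightarrow> real" where
  "mat_inf_norm A = Max (range (\<lambda>i. \<Sum>j\<in>UNIV. \<bar>A $ i $ j\<bar>))"

definition diag_dominant :: "real ^ 'd ^ 'd \<Rightarrow> bool" where
  "diag_dominant A \<longleftrightarrow> (\<forall>i. \<bar>A $ i $ i\<bar> \<ge> (\<Sum>j\<in>UNIV - {i}. \<bar>A $ i $ j\<bar>))"

definition robust_statistic :: "nat \<Rightarrow> ((nat \<Rightarrow> real ^ 'd) \<Rightarrow> real ^ 'd) \<Rightarrow> bool" where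
  "robust_statistic B rs \<longleftrightarrow>
     (\<forall>X Y j. (\<forall>i\<in>{1..B}. X i $ j = Y i $ j) \<longrightarrow> rs X $ j = rs Y $ j) \<and>
     (\<forall>X X' \<rho>. real (card {i\<in>{1..B}. X i \<in> linf_ball X' \<rho>}) > real B / 2
                \<longrightarrow> rs X \<in> linf_ball X' \<rho>) \<and>
     (\<forall>X Y \<Delta>. (\<forall>i\<in>{1..B}. infnorm (Y i - X i) \<le> \<Delta>) \<longrightarrow> infnorm (rs X - rs Y) \<le> \<Delta>) \<and>
     (\<forall>X (a::real) b. rs (\<lambda>i. a *\<^sub>R X i + b) = a *\<^sub>R rs X + b)"

definition robust_est :: "nat \<Rightarrow> ((nat \<Rightarrow> real ^ 'd) \<Rightarrow> real ^ 'd) \<Rightarrow> (nat \<Rightarrow> real ^ 'd) \<Rightarrow> real \<Rightarrow> real ^ 'd" where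
  "robust_est B rs X \<sigma> =
     (\<chi> j. let xbar = ((1 / real B) *\<^sub>R (\<Sum>i\<in>{1..B}. X i)) $ j; xr = rs X $ j
           in if \<bar>xr - xbar\<bar> \<ge> \<sigma> then max (xr - \<sigma>) (min (xr + \<sigma>) xbar) else xbar)"

text \<open>q(x, user) = (1/m) sum over the m points of the user of grad f(x; z).
  A user is represented as an indexed family of m data points (k = 0..m-1).\<close>
definition qgrad :: "(real ^ 'd \<Rightarrow> 'z \<Rightarrow> real ^ 'd) \<Rightarrow> nat \<Rightarrow> real ^ 'd \<Rightarrow> (nat \<Rightarrow> 'z) \<Rightarrow> real ^ 'd" where
  "qgrad gradf m x U = (1 / real m) *\<^sub>R (\<Sum>k<m. gradf x (U k))"

text \<open>Trajectory of SGDsub: Z i t is user Z_{i,t}; x_0 = x0;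
  x_t = Pi_X (x_{t-1} - eta g_{t-1}), g_{t-1} = RobustEst(q_t(Z_{1,t}),...,q_t(Z_{B,t}); varsigma).\<close>
fun sgd_traj :: "(real ^ 'd \<Rightarrow> 'z \<Rightarrow> real ^ 'd) \<Rightarrow> nat \<Rightarrow> nat \<Rightarrow> ((nat \<Rightarrow> real ^ 'd) \<Rightarrow> real ^ 'd)
     \<Rightarrow> (real ^ 'd) set \<Rightarrow> real \<Rightarrow> real \<Rightarrow> real ^ 'd \<Rightarrow> (nat \<Rightarrow> nat \<Rightarrow> nat \<Rightarrow> 'z) \<Rightarrow> nat \<Rightarrow> real ^ 'd" where
  "sgd_traj gradf m B rs Xdom \<eta> \<sigma> x0 Z 0 = x0"
| "sgd_traj gradf m B rs Xdom \<eta> \<sigma> x0 Z (Suc t) =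
     (let x = sgd_traj gradf m B rs Xdom \<eta> \<sigma> x0 Z t
      in closest_point Xdom (x - \<eta> *\<^sub>R robust_est B rs (\<lambda>i. qgrad gradf m x (Z i (Suc t))) \<sigma>))"

definition s_stat :: "(real ^ 'd \<Rightarrow> 'z \<Rightarrow> real ^ 'd) \<Rightarrow> nat \<Rightarrow> nat \<Rightarrow> ((nat \<Rightarrow> real ^ 'd) \<Rightarrow> real ^ 'd)
     \<Rightarrow> (real ^ 'd) set \<Rightarrow> real \<Rightarrow> real \<Rightarrow> real ^ 'd \<Rightarrow> (nat \<Rightarrow> nat \<Rightarrow> nat \<Rightarrow> 'z) \<Rightarrow> nat \<Rightarrow> real \<Rightarrow> real" where
  "s_stat gradf m B rs Xdom \<eta> \<sigma> x0 Z t \<tau> =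
     (let x = sgd_traj gradf m B rs Xdom \<eta> \<sigma> x0 Z (t - 1)
      in (1 / real B) * (\<Sum>i\<in>{1..B}. \<Sum>j\<in>{1..B}.
            exp (- \<tau> * infnorm (qgrad gradf m x (Z i t) - qgrad gradf m x (Z j t)))))"

end

theory Submission
  imports Defs
begin


lemma infnorm_le_coords:
  fixes v :: "real^'n"
  assumes "\<And>j. \<bar>v$j\<bar> \<le> D"
  shows "infnorm v \<le> D"
  unfolding infnorm_cart by (rule cSup_least) (use assms in auto)

lemma infnorm_le_iff:
  "infnorm (v::real^'n) \<le> D \<longleftrightarrow> (\<forall>j. \<bar>v$j\<bar> \<le> D)"
  by (meson component_le_infnorm_cart infnorm_le_coords order_trans)

lemma hess_diag_nonneg:
  fixes f :: "real^'d \<Rightarrow> real" and g :: "real^'d \<Rightarrow> real^'d" and H :: "real^'d \<Rightarrow> real^'d^'d"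
  assumes grad: "\<And>x. (f has_derivative (\<lambda>h. g x \<bullet> h)) (at x)"
    and hess: "\<And>x. (g has_derivative (\<lambda>h. H x *v h)) (at x)"
    and cvx: "convex_on UNIV f"
  shows "0 \<le> H x $ k $ k"
proof -
  define e :: "real^'d" where "e = axis k 1"
  define \<phi> where "\<phi> s = f (x + s *\<^sub>R e)" for s
  define \<psi> where "\<psi> s = g (x + s *\<^sub>R e) $ k" for s
  have ge: "g p \<bullet> e = g p $ k" for p
    by (simp add: e_def inner_axis)
  have lin: "((\<lambda>s. x + s *\<^sub>R e) has_derivative (\<lambda>h. h *\<^sub>R e)) (at s)" for s
    by (auto intro!: derivative_eq_intros)
  have dphi: "(\<phi> has_field_derivative \<psi> s) (at s)" for s
  proof -
    have "((\<lambda>s. f (x + s *\<^sub>R e)) has_derivative (\<lambda>h. g (x + s *\<^sub>R e) \<bullet> (h *\<^sub>R e))) (at s)"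
      by (rule has_derivative_compose[OF lin grad])
    then show ?thesis unfolding \<phi>_def \<psi>_def
      by (rule has_derivative_imp_has_field_derivative) (simp add: ge)
  qed
  have cphi: "convex_on UNIV \<phi>"
  proof (rule convex_onI)
    fix t a b :: real assume t: "0 < t" "t < 1"
    have "x + ((1 - t) * a + t * b) *\<^sub>R e = (1 - t) *\<^sub>R (x + a *\<^sub>R e) + t *\<^sub>R (x + b *\<^sub>R e)"
      by (simp add: algebra_simps)
    then show "\<phi> ((1 - t) *\<^sub>R a + t *\<^sub>R b) \<le> (1 - t) * \<phi> a + t * \<phi> b"
      unfolding \<phi>_def using convex_onD[OF cvx, of t] t by simp
  qed simp
  have mono: "\<psi> a \<le> \<psi> b" if "a < b" for a b
  proof -
    have 1: "\<phi> b - \<phi> a \<ge> \<psi> a * (b - a)"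
      by (rule convex_on_imp_above_tangent[OF cphi]) (auto intro: has_field_derivative_at_within dphi)
    have 2: "\<phi> a - \<phi> b \<ge> \<psi> b * (a - b)"
      by (rule convex_on_imp_above_tangent[OF cphi]) (auto intro: has_field_derivative_at_within dphi)
    from 1 2 have "(\<psi> b - \<psi> a) * (b - a) \<ge> 0" by (simp add: algebra_simps)
    with that show ?thesis by (simp add: zero_le_mult_iff)
  qed
  have dpsi: "(\<psi> has_field_derivative H x $ k $ k) (at 0)"
  proof -
    have "((\<lambda>s. g (x + s *\<^sub>R e)) has_derivative (\<lambda>h. H (x + 0 *\<^sub>R e) *v (h *\<^sub>R e))) (at 0)"
      by (rule has_derivative_compose[OF lin hess])
    then have "((\<lambda>s. g (x + s *\<^sub>R e) $ k) has_derivative (\<lambda>h. (H (x + 0 *\<^sub>R e) *v (h *\<^sub>R e)) $ k)) (at 0)"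
      by (rule bounded_linear.has_derivative[OF bounded_linear_vec_nth])
    then show ?thesis unfolding \<psi>_def
      by (rule has_derivative_imp_has_field_derivative)
        (simp add: e_def matrix_vector_mult_def axis_def if_distrib cong: if_cong)
  qed
  show ?thesis
  proof (rule ccontr)
    assume "\<not> ?thesis"
    then obtain d where "d > 0" "\<forall>h>0. h < d \<longrightarrow> \<psi> 0 > \<psi> (0 + h)"
      using DERIV_neg_dec_right[OF dpsi] by force
    then have "\<psi> 0 > \<psi> (d/2)" by auto
    moreover have "\<psi> 0 \<le> \<psi> (d/2)" using mono \<open>d > 0\<close> by simp
    ultimately show False by simp
  qed
qed



lemma mvt_coord:
  fixes g :: "real^'n \<Rightarrow> real^'m"
  assumes der: "\<And>p. (g has_derivative D p) (at p)"
    and bnd: "\<And>p. \<bar>D p (y - x) $ k\<bar> \<le> L"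
  shows "\<bar>(g y - g x) $ k\<bar> \<le> L"
proof -
  define \<psi> where "\<psi> s = g (x + s *\<^sub>R (y - x)) $ k" for s
  have lin: "((\<lambda>s. x + s *\<^sub>R (y - x)) has_derivative (\<lambda>h. h *\<^sub>R (y - x))) (at s)" for s
    by (auto intro!: derivative_eq_intros)
  have d: "DERIV \<psi> s :> D (x + s *\<^sub>R (y - x)) (y - x) $ k" for s
  proof -
    have "((\<lambda>s. g (x + s *\<^sub>R (y - x))) has_derivative (\<lambda>h. D (x + s *\<^sub>R (y - x)) (h *\<^sub>R (y - x)))) (at s)"
      by (rule has_derivative_compose[OF lin der])
    then have "((\<lambda>s. g (x + s *\<^sub>R (y - x)) $ k) has_derivative (\<lambda>h. D (x + s *\<^sub>R (y - x)) (h *\<^sub>R (y - x)) $ k)) (at s)"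
      by (rule bounded_linear.has_derivative[OF bounded_linear_vec_nth])
    moreover have "linear (D (x + s *\<^sub>R (y - x)))" using der has_derivative_linear by blast
    ultimately show ?thesis unfolding \<psi>_def
      by (intro has_derivative_imp_has_field_derivative) (auto simp: linear_scale mult.commute)
  qed
  obtain z where "\<psi> 1 - \<psi> 0 = (1 - 0) * D (x + z *\<^sub>R (y - x)) (y - x) $ k"
    using MVT2[of 0 1 \<psi>, OF _ d] by auto
  then show ?thesis using bnd[of "x + z *\<^sub>R (y - x)"] unfolding \<psi>_def by simp
qed

lemma row_bound:
  fixes H :: "real^'n^'n"
  shows "\<bar>(H *v v) $ k\<bar> \<le> mat_inf_norm H * infnorm v"
proof -
  have "\<bar>(H *v v) $ k\<bar> \<le> (\<Sum>j\<in>UNIV. \<bar>H$k$j\<bar> * infnorm v)"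
    unfolding matrix_vector_mult_def
    by (simp, rule order_trans[OF sum_abs])
       (auto intro!: sum_mono simp: abs_mult intro: mult_left_mono component_le_infnorm_cart)
  also have "\<dots> = (\<Sum>j\<in>UNIV. \<bar>H$k$j\<bar>) * infnorm v" by (simp add: sum_distrib_right)
  also have "\<dots> \<le> mat_inf_norm H * infnorm v"
    unfolding mat_inf_norm_def by (intro mult_right_mono Max_ge) (auto simp: infnorm_pos_le)
  finally show ?thesis .
qed

lemma diag_le_norm:
  fixes H :: "real^'n^'n"
  shows "\<bar>H$k$k\<bar> \<le> mat_inf_norm H"
proof -
  have "\<bar>H$k$k\<bar> \<le> (\<Sum>j\<in>UNIV. \<bar>H$k$j\<bar>)"
    by (rule member_le_sum) auto
  also have "\<dots> \<le> mat_inf_norm H"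
    unfolding mat_inf_norm_def by (intro Max_ge) auto
  finally show ?thesis .
qed

lemma step_bound:
  fixes H :: "real^'n^'n"
  assumes "0 \<le> \<eta>" "\<eta> * mat_inf_norm H \<le> 1" "diag_dominant H" "0 \<le> H$k$k"
  shows "\<bar>(v - \<eta> *\<^sub>R (H *v v)) $ k\<bar> \<le> infnorm v"
proof -
  define S where "S = (\<Sum>j\<in>UNIV - {k}. H$k$j * v$j)"
  have Hv: "(H *v v) $ k = H$k$k * v$k + S"
    unfolding matrix_vector_mult_def S_def by (simp add: sum.remove[of UNIV k])
  have "\<bar>S\<bar> \<le> (\<Sum>j\<in>UNIV - {k}. \<bar>H$k$j\<bar> * infnorm v)"
    unfolding S_def
    by (rule order_trans[OF sum_abs])
       (auto intro!: sum_mono simp: abs_mult intro: mult_left_mono component_le_infnorm_cart)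
  also have "\<dots> = (\<Sum>j\<in>UNIV - {k}. \<bar>H$k$j\<bar>) * infnorm v" by (simp add: sum_distrib_right)
  also have "\<dots> \<le> H$k$k * infnorm v"
  proof (intro mult_right_mono)
    show "(\<Sum>j\<in>UNIV - {k}. \<bar>H$k$j\<bar>) \<le> H$k$k"
      using assms(3,4) unfolding diag_dominant_def by (metis abs_of_nonneg)
  qed (simp add: infnorm_pos_le)
  finally have S: "\<bar>S\<bar> \<le> H$k$k * infnorm v" .
  have d: "\<eta> * H$k$k \<le> 1"
    using diag_le_norm[of H k] assms by (smt (verit) mult_left_mono)
  have vk: "\<bar>v$k\<bar> \<le> infnorm v" by (rule component_le_infnorm_cart)
  have "\<bar>(v - \<eta> *\<^sub>R (H *v v)) $ k\<bar> = \<bar>(1 - \<eta> * H$k$k) * v$k - \<eta> * S\<bar>"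
    by (simp add: Hv algebra_simps)
  also have "\<dots> \<le> (1 - \<eta> * H$k$k) * \<bar>v$k\<bar> + \<eta> * \<bar>S\<bar>"
    using d assms(1) by (simp add: abs_mult abs_triangle_ineq4 order_trans[OF abs_triangle_ineq4])
  also have "\<dots> \<le> (1 - \<eta> * H$k$k) * infnorm v + \<eta> * (H$k$k * infnorm v)"
    using d assms(1) vk S by (intro add_mono mult_left_mono) auto
  also have "\<dots> = infnorm v" by (simp add: algebra_simps)
  finally show ?thesis .
qed



lemma avg_bound:
  fixes a :: "nat \<Rightarrow> real"
  assumes "finite I" "card I \<ge> 1" "\<And>k. k \<in> I \<Longrightarrow> \<bar>a k\<bar> \<le> D"
  shows "\<bar>(1 / real (card I)) * (\<Sum>k\<in>I. a k)\<bar> \<le> D"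
proof -
  have "\<bar>\<Sum>k\<in>I. a k\<bar> \<le> (\<Sum>k\<in>I. D)"
    by (rule order_trans[OF sum_abs]) (rule sum_mono, rule assms(3))
  also have "\<dots> = real (card I) * D" by simp
  finally have "\<bar>\<Sum>k\<in>I. a k\<bar> \<le> real (card I) * D" .
  then show ?thesis using assms(2)
    by (simp add: abs_mult field_simps)
qed

lemma grad_lip:
  fixes gradf :: "real ^ 'd \<Rightarrow> 'z \<Rightarrow> real ^ 'd" and hess :: "real ^ 'd \<Rightarrow> 'z \<Rightarrow> real ^ 'd ^ 'd"
  assumes hessian: "\<And>x z. ((\<lambda>y. gradf y z) has_derivative (\<lambda>h. hess x z *v h)) (at x)"
    and smooth: "\<And>x z. mat_inf_norm (hess x z) \<le> \<beta>"
  shows "\<bar>(gradf y z - gradf x z) $ k\<bar> \<le> \<beta> * infnorm (y - x)"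
proof (rule mvt_coord[where g = "\<lambda>p. gradf p z" and D = "\<lambda>p h. hess p z *v h"])
  show "((\<lambda>p. gradf p z) has_derivative (*v) (hess p z)) (at p)" for p
    using hessian by simp
  show "\<bar>(hess p z *v (y - x)) $ k\<bar> \<le> \<beta> * infnorm (y - x)" for p
    by (rule order_trans[OF row_bound]) (intro mult_right_mono smooth infnorm_pos_le)
qed

lemma gd_nonexp:
  fixes f :: "real ^ 'd \<Rightarrow> 'z \<Rightarrow> real"
    and gradf :: "real ^ 'd \<Rightarrow> 'z \<Rightarrow> real ^ 'd" and hess :: "real ^ 'd \<Rightarrow> 'z \<Rightarrow> real ^ 'd ^ 'd"
  assumes grad: "\<And>x z. ((\<lambda>y. f y z) has_derivative (\<lambda>h. gradf x z \<bullet> h)) (at x)"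
    and hessian: "\<And>x z. ((\<lambda>y. gradf y z) has_derivative (\<lambda>h. hess x z *v h)) (at x)"
    and convex: "\<And>z. convex_on UNIV (\<lambda>y. f y z)"
    and smooth: "\<And>x z. mat_inf_norm (hess x z) \<le> \<beta>"
    and diagdom: "\<And>x z. diag_dominant (hess x z)"
    and eta: "0 \<le> \<eta>" "\<eta> * \<beta> \<le> 1"
  shows "\<bar>((y - \<eta> *\<^sub>R gradf y z) - (x - \<eta> *\<^sub>R gradf x z)) $ k\<bar> \<le> infnorm (y - x)"
proof (rule mvt_coord[where g = "\<lambda>p. p - \<eta> *\<^sub>R gradf p z" and D = "\<lambda>p h. h - \<eta> *\<^sub>R (hess p z *v h)"])
  show "((\<lambda>p. p - \<eta> *\<^sub>R gradf p z) has_derivative (\<lambda>h. h - \<eta> *\<^sub>R (hess p z *v h))) (at p)" for p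
    by (intro has_derivative_diff has_derivative_ident has_derivative_scaleR_right hessian)
  show "\<bar>((y - x) - \<eta> *\<^sub>R (hess p z *v (y - x))) $ k\<bar> \<le> infnorm (y - x)" for p
  proof (rule step_bound)
    show "\<eta> * mat_inf_norm (hess p z) \<le> 1"
      using eta smooth[of p z] by (smt (verit) mult_left_mono)
    show "0 \<le> hess p z $ k $ k"
      by (rule hess_diag_nonneg[where f = "\<lambda>y. f y z" and g = "\<lambda>y. gradf y z"])
         (use grad hessian convex in auto)
  qed (use eta diagdom in auto)
qed

lemma qgrad_comp:
  "qgrad gradf m x U $ j = (1 / real m) * (\<Sum>k<m. gradf x (U k) $ j)"
  by (simp add: qgrad_def)

lemma q_lip:
  fixes gradf :: "real ^ 'd \<Rightarrow> 'z \<Rightarrow> real ^ 'd" and hess :: "real ^ 'd \<Rightarrow> 'z \<Rightarrow> real ^ 'd ^ 'd"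
  assumes hessian: "\<And>x z. ((\<lambda>y. gradf y z) has_derivative (\<lambda>h. hess x z *v h)) (at x)"
    and smooth: "\<And>x z. mat_inf_norm (hess x z) \<le> \<beta>"
    and m: "1 \<le> m"
  shows "\<bar>(qgrad gradf m y U - qgrad gradf m x U) $ j\<bar> \<le> \<beta> * infnorm (y - x)"
proof -
  have "(qgrad gradf m y U - qgrad gradf m x U) $ j
      = (1 / real (card {..<m})) * (\<Sum>k\<in>{..<m}. (gradf y (U k) - gradf x (U k)) $ j)"
    by (simp add: qgrad_comp sum_subtractf right_diff_distrib)
  also have "\<bar>\<dots>\<bar> \<le> \<beta> * infnorm (y - x)"
    by (rule avg_bound) (use m grad_lip[OF hessian smooth] in auto)
  finally show ?thesis .
qed

lemma u_nonexp:
  fixes f :: "real ^ 'd \<Rightarrow> 'z \<Rightarrow> real"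
    and gradf :: "real ^ 'd \<Rightarrow> 'z \<Rightarrow> real ^ 'd" and hess :: "real ^ 'd \<Rightarrow> 'z \<Rightarrow> real ^ 'd ^ 'd"
  assumes grad: "\<And>x z. ((\<lambda>y. f y z) has_derivative (\<lambda>h. gradf x z \<bullet> h)) (at x)"
    and hessian: "\<And>x z. ((\<lambda>y. gradf y z) has_derivative (\<lambda>h. hess x z *v h)) (at x)"
    and convex: "\<And>z. convex_on UNIV (\<lambda>y. f y z)"
    and smooth: "\<And>x z. mat_inf_norm (hess x z) \<le> \<beta>"
    and diagdom: "\<And>x z. diag_dominant (hess x z)"
    and eta: "0 \<le> \<eta>" "\<eta> * \<beta> \<le> 1"
    and m: "1 \<le> m"
  shows "\<bar>((y - \<eta> *\<^sub>R qgrad gradf m y U) - (x - \<eta> *\<^sub>R qgrad gradf m x U)) $ j\<bar> \<le> infnorm (y - x)"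
proof -
  have "((y - \<eta> *\<^sub>R qgrad gradf m y U) - (x - \<eta> *\<^sub>R qgrad gradf m x U)) $ j
      = (1 / real (card {..<m})) * (\<Sum>k\<in>{..<m}. ((y - \<eta> *\<^sub>R gradf y (U k)) - (x - \<eta> *\<^sub>R gradf x (U k))) $ j)"
  proof -
    have e: "(\<Sum>k\<in>{..<m}. ((y - \<eta> *\<^sub>R gradf y (U k)) - (x - \<eta> *\<^sub>R gradf x (U k))) $ j)
       = real m * (y$j - x$j) - \<eta> * (\<Sum>k<m. gradf y (U k) $ j) + \<eta> * (\<Sum>k<m. gradf x (U k) $ j)"
      by (simp add: sum_subtractf sum.distrib sum_distrib_left algebra_simps)
    show ?thesis using m unfolding e by (simp add: qgrad_comp field_simps)
  qed
  also have "\<bar>\<dots>\<bar> \<le> infnorm (y - x)"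
    by (rule avg_bound) (use m gd_nonexp[OF grad hessian convex smooth diagdom eta] in auto)
  finally show ?thesis .
qed



lemma linf_ball_eq: "linf_ball c r = {y. \<forall>j. \<bar>(y - c)$j\<bar> \<le> r}"
  unfolding linf_ball_def infnorm_le_iff ..

lemma linf_ball_box: "linf_ball c r = cbox (c - (\<chi> j. r)) (c + (\<chi> j. r))"
  by (auto simp: linf_ball_eq mem_box_cart abs_le_iff) (smt (verit))+

lemma proj_eq:
  assumes "0 \<le> r"
  shows "closest_point (linf_ball c r) v = (\<chi> j. max (c$j - r) (min (c$j + r) (v$j)))"
proof -
  define p where "p = (\<chi> j. max (c$j - r) (min (c$j + r) (v$j)))"
  have "p = closest_point (linf_ball c r) v"
  proof (rule closest_point_unique)
    show "convex (linf_ball c r)" by (simp add: linf_ball_box convex_box)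
    show "closed (linf_ball c r)" by (simp add: linf_ball_box closed_cbox)
    show "p \<in> linf_ball c r" using assms by (auto simp: linf_ball_eq p_def)
    show "\<forall>z\<in>linf_ball c r. dist v p \<le> dist v z"
    proof
      fix z assume "z \<in> linf_ball c r"
      then have z: "\<And>j. \<bar>(z-c)$j\<bar> \<le> r" by (simp add: linf_ball_eq)
      have pt: "\<bar>v$i - p$i\<bar> \<le> \<bar>v$i - z$i\<bar>" for i
        using z[of i] by (simp add: p_def)
      have "norm (v - p) \<le> norm (v - z)"
        unfolding norm_le inner_vec_def
        by (intro sum_mono) (use pt in \<open>simp add: abs_le_square_iff power2_eq_square\<close>)
      then show "dist v p \<le> dist v z" by (simp add: dist_norm)
    qed
  qed
  then show ?thesis by (simp add: p_def)
qed

lemma proj_nonexp: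
  assumes "0 \<le> r"
  shows "\<bar>(closest_point (linf_ball c r) v - closest_point (linf_ball c r) w) $ j\<bar> \<le> \<bar>(v - w) $ j\<bar>"
  using assms by (simp add: proj_eq)

lemma clip_eq: "0 \<le> \<sigma> \<Longrightarrow> (if \<bar>xr - xb\<bar> \<ge> \<sigma> then max (xr - \<sigma>) (min (xr + \<sigma>) xb) else xb) = max (xr - \<sigma>) (min (xr + \<sigma>) (xb::real))"
  by auto

lemma robust_est_comp:
  "0 \<le> \<sigma> \<Longrightarrow> robust_est B rs X \<sigma> $ j
     = max (rs X $ j - \<sigma>) (min (rs X $ j + \<sigma>) ((1 / real B) * (\<Sum>i\<in>{1..B}. X i $ j)))"
  by (simp add: robust_est_def Let_def clip_eq[symmetric])

lemma clip_step:
  fixes \<eta> :: real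
  assumes "0 < \<eta>"
  shows "a - \<eta> * max (r - \<sigma>) (min (r + \<sigma>) mm)
       = min ((a - \<eta>*r) + \<eta>*\<sigma>) (max ((a - \<eta>*r) - \<eta>*\<sigma>) (a - \<eta>*mm))"
proof -
  have eq: "\<eta> * max (r - \<sigma>) (min (r + \<sigma>) mm) = max (\<eta>*r - \<eta>*\<sigma>) (min (\<eta>*r + \<eta>*\<sigma>) (\<eta>*mm))"
    using assms by (simp add: max_mult_distrib_left min_mult_distrib_left algebra_simps)
  have g: "\<And>P Q M. a - max P (min Q M) = min (a-P) (max (a-Q) (a-M))" for a :: real
    by (auto simp: max_def min_def)
  show ?thesis unfolding eq g by (simp add: algebra_simps)
qed

lemma clip_lip:
  fixes A A' R R' s D :: real
  shows "0 \<le> s \<Longrightarrow> \<bar>A - A'\<bar> \<le> D \<Longrightarrow> \<bar>R - R'\<bar> \<le> D \<Longrightarrow>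
    \<bar>min (R+s) (max (R-s) A) - min (R'+s) (max (R'-s) A')\<bar> \<le> D"
  by (simp add: max_def min_def abs_le_iff)



lemma robust_step:
  fixes f :: "real ^ 'd \<Rightarrow> 'z \<Rightarrow> real"
    and gradf :: "real ^ 'd \<Rightarrow> 'z \<Rightarrow> real ^ 'd" and hess :: "real ^ 'd \<Rightarrow> 'z \<Rightarrow> real ^ 'd ^ 'd"
    and rs :: "(nat \<Rightarrow> real ^ 'd) \<Rightarrow> real ^ 'd" and U :: "nat \<Rightarrow> nat \<Rightarrow> 'z"
  assumes grad: "\<And>x z. ((\<lambda>y. f y z) has_derivative (\<lambda>h. gradf x z \<bullet> h)) (at x)"
    and hessian: "\<And>x z. ((\<lambda>y. gradf y z) has_derivative (\<lambda>h. hess x z *v h)) (at x)"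
    and convex: "\<And>z. convex_on UNIV (\<lambda>y. f y z)"
    and smooth: "\<And>x z. mat_inf_norm (hess x z) \<le> \<beta>"
    and diagdom: "\<And>x z. diag_dominant (hess x z)"
    and eta: "0 < \<eta>" "\<eta> * \<beta> \<le> 1"
    and m: "1 \<le> m" and B: "1 \<le> B" and rs: "robust_statistic B rs"
    and sig: "0 \<le> \<sigma>" and r: "0 \<le> r"
  shows "infnorm (closest_point (linf_ball c r) (y - \<eta> *\<^sub>R robust_est B rs (\<lambda>i. qgrad gradf m y (U i)) \<sigma>)
          - closest_point (linf_ball c r) (x - \<eta> *\<^sub>R robust_est B rs (\<lambda>i. qgrad gradf m x (U i)) \<sigma>))
         \<le> infnorm (y - x)"
proof (rule infnorm_le_coords)
  fix j
  define X where "X = (\<lambda>i. qgrad gradf m x (U i))"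
  define Y where "Y = (\<lambda>i. qgrad gradf m y (U i))"
  define uX where "uX = (\<lambda>i. (-\<eta>) *\<^sub>R X i + x)"
  define uY where "uY = (\<lambda>i. (-\<eta>) *\<^sub>R Y i + y)"
  have rs2: "\<forall>X Y \<Delta>. (\<forall>i\<in>{1..B}. infnorm (Y i - X i) \<le> \<Delta>) \<longrightarrow> infnorm (rs X - rs Y) \<le> \<Delta>"
   and rs3: "\<forall>X (a::real) b. rs (\<lambda>i. a *\<^sub>R X i + b) = a *\<^sub>R rs X + b"
    using rs unfolding robust_statistic_def by blast+
  have RX: "x$j - \<eta> * rs X $ j = rs uX $ j" unfolding uX_def rs3[rule_format] by simp
  have RY: "y$j - \<eta> * rs Y $ j = rs uY $ j" unfolding uY_def rs3[rule_format] by simp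
  have uD: "\<bar>(uY i - uX i) $ j'\<bar> \<le> infnorm (y - x)" for i j'
    using u_nonexp[OF grad hessian convex smooth diagdom less_imp_le[OF eta(1)] eta(2) m, where y=y and U="U i" and j=j' and x=x]
    by (simp add: uX_def uY_def X_def Y_def algebra_simps)
  have "infnorm (rs uX - rs uY) \<le> infnorm (y - x)"
    using rs2 infnorm_le_coords[OF uD] by blast
  then have Rd: "\<bar>rs uY $ j - rs uX $ j\<bar> \<le> infnorm (y - x)"
    using component_le_infnorm_cart[of "rs uX - rs uY" j] by simp
  have sX: "(\<Sum>i\<in>{1..B}. uX i $ j) = real B * x$j - \<eta> * (\<Sum>i\<in>{1..B}. X i $ j)"
    by (simp add: uX_def sum_subtractf sum_distrib_left)
  have sY: "(\<Sum>i\<in>{1..B}. uY i $ j) = real B * y$j - \<eta> * (\<Sum>i\<in>{1..B}. Y i $ j)"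
    by (simp add: uY_def sum_subtractf sum_distrib_left)
  have AX: "x$j - \<eta> * ((1/real B) * (\<Sum>i\<in>{1..B}. X i $ j)) = (1/real B) * (\<Sum>i\<in>{1..B}. uX i $ j)"
    using B unfolding sX by (simp add: field_simps)
  have AY: "y$j - \<eta> * ((1/real B) * (\<Sum>i\<in>{1..B}. Y i $ j)) = (1/real B) * (\<Sum>i\<in>{1..B}. uY i $ j)"
    using B unfolding sY by (simp add: field_simps)
  have "(1/real B) * (\<Sum>i\<in>{1..B}. uY i $ j) - (1/real B) * (\<Sum>i\<in>{1..B}. uX i $ j)
      = (1/real (card {1..B})) * (\<Sum>i\<in>{1..B}. (uY i - uX i) $ j)"
    by (simp add: sum_subtractf right_diff_distrib)
  also have "\<bar>\<dots>\<bar> \<le> infnorm (y - x)"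
    by (rule avg_bound) (use B uD in auto)
  finally have Ad: "\<bar>(1/real B) * (\<Sum>i\<in>{1..B}. uY i $ j) - (1/real B) * (\<Sum>i\<in>{1..B}. uX i $ j)\<bar>
      \<le> infnorm (y - x)" .
  have "\<bar>(closest_point (linf_ball c r) (y - \<eta> *\<^sub>R robust_est B rs Y \<sigma>)
          - closest_point (linf_ball c r) (x - \<eta> *\<^sub>R robust_est B rs X \<sigma>)) $ j\<bar>
       \<le> \<bar>((y - \<eta> *\<^sub>R robust_est B rs Y \<sigma>) - (x - \<eta> *\<^sub>R robust_est B rs X \<sigma>)) $ j\<bar>"
    by (rule proj_nonexp[OF r])
  also have "\<dots> = \<bar>(y$j - \<eta> * robust_est B rs Y \<sigma> $ j) - (x$j - \<eta> * robust_est B rs X \<sigma> $ j)\<bar>"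
    by simp
  also have "\<dots> \<le> infnorm (y - x)"
    unfolding robust_est_comp[OF sig] clip_step[OF eta(1)] AX AY RX RY
    by (rule clip_lip) (use eta sig Ad Rd in auto)
  finally show "\<bar>(closest_point (linf_ball c r) (y - \<eta> *\<^sub>R robust_est B rs (\<lambda>i. qgrad gradf m y (U i)) \<sigma>)
          - closest_point (linf_ball c r) (x - \<eta> *\<^sub>R robust_est B rs (\<lambda>i. qgrad gradf m x (U i)) \<sigma>)) $ j\<bar>
         \<le> infnorm (y - x)" unfolding X_def Y_def .
qed

lemma exp_lip:
  fixes \<tau> a b :: real
  assumes "0 \<le> \<tau>" "0 \<le> a" "0 \<le> b"
  shows "\<bar>exp (- \<tau> * a) - exp (- \<tau> * b)\<bar> \<le> \<tau> * \<bar>a - b\<bar>"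
proof -
  have key: "\<bar>exp (- \<tau> * a) - exp (- \<tau> * b)\<bar> \<le> \<tau> * (b - a)" if "0 \<le> a" "a \<le> b" for a b
  proof -
    have e: "exp (- \<tau> * a) - exp (- \<tau> * b) = exp (- \<tau> * a) * (1 - exp (- (\<tau> * (b - a))))"
      by (simp add: algebra_simps flip: exp_add)
    have u: "0 \<le> \<tau> * (b - a)" using assms that by simp
    have 1: "0 \<le> 1 - exp (- (\<tau> * (b - a)))" using u by simp
    have 2: "1 - exp (- (\<tau> * (b - a))) \<le> \<tau> * (b - a)"
      using exp_ge_add_one_self[of "- (\<tau> * (b - a))"] by simp
    have 3: "exp (- \<tau> * a) \<le> 1" using assms that by simp
    have "exp (- \<tau> * a) * (1 - exp (- (\<tau> * (b - a)))) \<le> 1 * (\<tau> * (b - a))"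
      by (rule mult_mono) (use 1 2 3 in auto)
    moreover have "0 \<le> exp (- \<tau> * a) * (1 - exp (- (\<tau> * (b - a))))" using 1 by simp
    ultimately show ?thesis unfolding e by simp
  qed
  show ?thesis
  proof (cases "a \<le> b")
    case True then show ?thesis using key[of a b] assms by simp
  next
    case False then show ?thesis using key[of b a] assms by (simp add: abs_minus_commute)
  qed
qed

lemma s_bounds:
  fixes Q :: "nat \<Rightarrow> real^'d" and \<tau> :: real
  assumes B: "1 \<le> B" and tau: "0 \<le> \<tau>"
  shows "1 \<le> (1/real B) * (\<Sum>i\<in>{1..B}. \<Sum>j\<in>{1..B}. exp (- \<tau> * infnorm (Q i - Q j)))"
    and "(1/real B) * (\<Sum>i\<in>{1..B}. \<Sum>j\<in>{1..B}. exp (- \<tau> * infnorm (Q i - Q j))) \<le> real B"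
proof -
  have lo: "1 \<le> (\<Sum>j\<in>{1..B}. exp (- \<tau> * infnorm (Q i - Q j)))" if "i \<in> {1..B}" for i
  proof -
    have "exp (- \<tau> * infnorm (Q i - Q i)) \<le> (\<Sum>j\<in>{1..B}. exp (- \<tau> * infnorm (Q i - Q j)))"
      by (rule member_le_sum) (use that in auto)
    then show ?thesis by (simp add: infnorm_0)
  qed
  have "real B = (\<Sum>i\<in>{1..B}. 1)" by simp
  also have "\<dots> \<le> (\<Sum>i\<in>{1..B}. \<Sum>j\<in>{1..B}. exp (- \<tau> * infnorm (Q i - Q j)))"
    by (rule sum_mono) (rule lo)
  finally show "1 \<le> (1/real B) * (\<Sum>i\<in>{1..B}. \<Sum>j\<in>{1..B}. exp (- \<tau> * infnorm (Q i - Q j)))"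
    using B by (simp add: field_simps)
  have hi: "exp (- \<tau> * infnorm (Q i - Q j)) \<le> 1" for i j
    using tau infnorm_pos_le[of "Q i - Q j"] by simp
  have "(\<Sum>i\<in>{1..B}. \<Sum>j\<in>{1..B}. exp (- \<tau> * infnorm (Q i - Q j))) \<le> (\<Sum>i\<in>{1..B}. \<Sum>j\<in>{1..B}. 1)"
    by (intro sum_mono hi)
  also have "\<dots> = real B * real B" by simp
  finally show "(1/real B) * (\<Sum>i\<in>{1..B}. \<Sum>j\<in>{1..B}. exp (- \<tau> * infnorm (Q i - Q j))) \<le> real B"
    using B by (simp add: field_simps)
qed



lemma clip_bound:
  fixes a b u v s :: real
  assumes "0 \<le> s"
  shows "\<bar>max (a - s) (min (a + s) u) - max (b - s) (min (b + s) v)\<bar> \<le> \<bar>a - b\<bar> + 2 * s"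
proof -
  have "a - s \<le> max (a - s) (min (a + s) u)" "max (a - s) (min (a + s) u) \<le> a + s"
       "b - s \<le> max (b - s) (min (b + s) v)" "max (b - s) (min (b + s) v) \<le> b + s"
    using assms by auto
  then show ?thesis unfolding abs_le_iff using abs_ge_self[of "a-b"] abs_ge_minus_self[of "a-b"] by linarith
qed

theorem lemma3p9:
  fixes f :: "real ^ 'd \<Rightarrow> 'z \<Rightarrow> real"
    and gradf :: "real ^ 'd \<Rightarrow> 'z \<Rightarrow> real ^ 'd"
    and hess :: "real ^ 'd \<Rightarrow> 'z \<Rightarrow> real ^ 'd ^ 'd"
    and c x0 :: "real ^ 'd" and r \<beta> \<eta> \<tau> :: real
    and B m T :: nat
    and rs :: "(nat \<Rightarrow> real ^ 'd) \<Rightarrow> real ^ 'd"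
    and Z1 Z2 :: "nat \<Rightarrow> nat \<Rightarrow> nat \<Rightarrow> 'z"
  assumes r_nonneg: "0 \<le> r"
    and x0_in: "x0 \<in> linf_ball c r"
    and B_pos: "1 \<le> B" and m_pos: "1 \<le> m"
    and beta_nonneg: "0 \<le> \<beta>" and eta_pos: "0 < \<eta>" and tau_pos: "0 < \<tau>"
    and grad: "\<And>x z. ((\<lambda>y. f y z) has_derivative (\<lambda>h. gradf x z \<bullet> h)) (at x)"
    and hessian: "\<And>x z. ((\<lambda>y. gradf y z) has_derivative (\<lambda>h. hess x z *v h)) (at x)"
    and convex: "\<And>z. convex_on UNIV (\<lambda>y. f y z)"
    and smooth: "\<And>x z. mat_inf_norm (hess x z) \<le> \<beta>"
    and diagdom: "\<And>x z. diag_dominant (hess x z)"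
    and rs: "robust_statistic B rs"
    and differ: "\<And>i t. (i, t) \<noteq> (1, 1) \<Longrightarrow> Z1 i t = Z2 i t"
    and step: "6 * \<beta> * \<eta> * real B \<le> 1"
    and aligned: "\<exists>X' Y'.
        real (card {i\<in>{1..B}. qgrad gradf m x0 (Z1 i 1) \<in> linf_ball X' (1 / \<tau>)}) \<ge> 2 * real B / 3 \<and>
        real (card {i\<in>{1..B}. qgrad gradf m x0 (Z2 i 1) \<in> linf_ball Y' (1 / \<tau>)}) \<ge> 2 * real B / 3"
  shows "\<forall>t\<in>{2..T}.
     \<bar>s_stat gradf m B rs (linf_ball c r) \<eta> (1 / \<tau>) x0 Z1 t \<tau>
      - s_stat gradf m B rs (linf_ball c r) \<eta> (1 / \<tau>) x0 Z2 t \<tau>\<bar> \<le> 2"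
proof
  fix t assume t: "t \<in> {2..T}"
  define \<sigma> where "\<sigma> = 1 / \<tau>"
  have sig: "0 < \<sigma>" using tau_pos by (simp add: \<sigma>_def)
  define x where "x = sgd_traj gradf m B rs (linf_ball c r) \<eta> \<sigma> x0 Z1"
  define y where "y = sgd_traj gradf m B rs (linf_ball c r) \<eta> \<sigma> x0 Z2"
  define Q1 where "Q1 = (\<lambda>i. qgrad gradf m (x (t - 1)) (Z1 i t))"
  define Q2 where "Q2 = (\<lambda>i. qgrad gradf m (y (t - 1)) (Z2 i t))"
  define s1 where "s1 = (1/real B) * (\<Sum>i\<in>{1..B}. \<Sum>j\<in>{1..B}. exp (- \<tau> * infnorm (Q1 i - Q1 j)))"
  define s2 where "s2 = (1/real B) * (\<Sum>i\<in>{1..B}. \<Sum>j\<in>{1..B}. exp (- \<tau> * infnorm (Q2 i - Q2 j)))"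
  have S1: "s_stat gradf m B rs (linf_ball c r) \<eta> (1 / \<tau>) x0 Z1 t \<tau> = s1"
    by (simp add: s_stat_def s1_def Q1_def x_def \<sigma>_def Let_def)
  have S2: "s_stat gradf m B rs (linf_ball c r) \<eta> (1 / \<tau>) x0 Z2 t \<tau> = s2"
    by (simp add: s_stat_def s2_def Q2_def y_def \<sigma>_def Let_def)
  have etab: "\<eta> * \<beta> \<le> 1"
  proof -
    have a: "\<eta> * \<beta> * 1 \<le> \<eta> * \<beta> * real B" using B_pos eta_pos beta_nonneg by (intro mult_left_mono) auto
    have b: "0 \<le> \<eta> * \<beta> * real B" using eta_pos beta_nonneg by simp
    have c: "6 * \<beta> * \<eta> * real B = 6 * (\<eta> * \<beta> * real B)" by (simp add: ac_simps)
    show ?thesis using a b c step by linarith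
  qed
  have "\<bar>s1 - s2\<bar> \<le> 2"
  proof (cases "B \<le> 3")
    case True
    have "1 \<le> s1" "s1 \<le> real B" "1 \<le> s2" "s2 \<le> real B"
      unfolding s1_def s2_def using s_bounds[OF B_pos, of \<tau>] tau_pos by auto
    then show ?thesis using True by linarith
  next
    case False
    then have B4: "4 \<le> B" by simp
    define QX where "QX = (\<lambda>i. qgrad gradf m x0 (Z1 i 1))"
    define QY where "QY = (\<lambda>i. qgrad gradf m x0 (Z2 i 1))"
    obtain X' Y' where c1: "real (card {i\<in>{1..B}. QX i \<in> linf_ball X' \<sigma>}) \<ge> 2 * real B / 3"
      and c2: "real (card {i\<in>{1..B}. QY i \<in> linf_ball Y' \<sigma>}) \<ge> 2 * real B / 3"
      using aligned unfolding \<sigma>_def QX_def QY_def by blast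
    define S1 where "S1 = {i\<in>{1..B}. QX i \<in> linf_ball X' \<sigma>}"
    define S2 where "S2 = {i\<in>{1..B}. QY i \<in> linf_ball Y' \<sigma>}"
    have "\<exists>k. k \<in> S1 \<and> k \<in> S2 \<and> k \<noteq> 1"
    proof (rule ccontr)
      assume no: "\<not> ?thesis"
      have fin: "finite S1" "finite S2" by (auto simp: S1_def S2_def)
      have dis: "(S1 - {1}) \<inter> (S2 - {1}) = {}" using no by auto
      have gen: "card (insert a A) \<le> Suc (card A)" for a :: nat and A
        by (cases "finite A") (auto simp: card_insert_if)
      have "(S1 - {1}) \<union> (S2 - {1}) \<subseteq> {2..B}" by (auto simp: S1_def S2_def)
      then have "card ((S1 - {1}) \<union> (S2 - {1})) \<le> card {2..B}" by (rule card_mono[rotated]) simp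
      moreover have "card ((S1 - {1}) \<union> (S2 - {1})) = card (S1 - {1}) + card (S2 - {1})"
        by (rule card_Un_disjoint) (use fin dis in auto)
      moreover have "card S1 \<le> Suc (card (S1 - {1}))"
      proof -
        have "card S1 \<le> card (insert 1 (S1 - {1}))" by (rule card_mono) (use fin in auto)
        also have "\<dots> \<le> Suc (card (S1 - {1}))" by (rule gen)
        finally show ?thesis .
      qed
      moreover have "card S2 \<le> Suc (card (S2 - {1}))"
      proof -
        have "card S2 \<le> card (insert 1 (S2 - {1}))" by (rule card_mono) (use fin in auto)
        also have "\<dots> \<le> Suc (card (S2 - {1}))" by (rule gen)
        finally show ?thesis .
      qed
      ultimately have "real (card S1) + real (card S2) \<le> real B + 1" using B4 by simp
      then show False using c1 c2 B4 unfolding S1_def S2_def by linarith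
    qed
    then obtain k where k: "k \<in> S1" "k \<in> S2" "k \<noteq> 1" by blast
    have Qk: "QX k = QY k" using differ[of k 1] k(3) by (simp add: QX_def QY_def)
    have rs1: "\<forall>X X' \<rho>. real (card {i\<in>{1..B}. X i \<in> linf_ball X' \<rho>}) > real B / 2
                \<longrightarrow> rs X \<in> linf_ball X' \<rho>"
      using rs unfolding robust_statistic_def by blast
    have rX: "rs QX \<in> linf_ball X' \<sigma>"
      using rs1[rule_format, of QX X' \<sigma>] c1 B_pos by simp
    have rY: "rs QY \<in> linf_ball Y' \<sigma>"
      using rs1[rule_format, of QY Y' \<sigma>] c2 B_pos by simp
    have rd: "\<bar>rs QX $ j - rs QY $ j\<bar> \<le> 4 * \<sigma>" for j
    proof -
      have "\<bar>(rs QX - X') $ j\<bar> \<le> \<sigma>" "\<bar>(QX k - X') $ j\<bar> \<le> \<sigma>"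
           "\<bar>(QY k - Y') $ j\<bar> \<le> \<sigma>" "\<bar>(rs QY - Y') $ j\<bar> \<le> \<sigma>"
        using rX rY k unfolding linf_ball_eq S1_def S2_def by auto
      then show ?thesis using Qk by simp
    qed
    have x1: "x 1 = closest_point (linf_ball c r) (x0 - \<eta> *\<^sub>R robust_est B rs QX \<sigma>)"
      by (simp add: x_def QX_def)
    have y1: "y 1 = closest_point (linf_ball c r) (x0 - \<eta> *\<^sub>R robust_est B rs QY \<sigma>)"
      by (simp add: y_def QY_def)
    have step1: "infnorm (x 1 - y 1) \<le> 6 * \<eta> * \<sigma>"
    proof (rule infnorm_le_coords)
      fix j
      have "\<bar>(x 1 - y 1) $ j\<bar>
          \<le> \<bar>((x0 - \<eta> *\<^sub>R robust_est B rs QX \<sigma>) - (x0 - \<eta> *\<^sub>R robust_est B rs QY \<sigma>)) $ j\<bar>"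
        unfolding x1 y1 by (rule proj_nonexp[OF r_nonneg])
      also have "\<dots> = \<eta> * \<bar>robust_est B rs QX \<sigma> $ j - robust_est B rs QY \<sigma> $ j\<bar>"
        using eta_pos by (simp add: abs_mult flip: right_diff_distrib)
      also have "\<dots> \<le> \<eta> * (6 * \<sigma>)"
      proof (rule mult_left_mono)
        show "\<bar>robust_est B rs QX \<sigma> $ j - robust_est B rs QY \<sigma> $ j\<bar> \<le> 6 * \<sigma>"
          unfolding robust_est_comp[OF less_imp_le[OF sig]]
          using clip_bound[OF less_imp_le[OF sig]] rd[of j] by (smt (verit))
      qed (use eta_pos in simp)
      finally show "\<bar>(x 1 - y 1) $ j\<bar> \<le> 6 * \<eta> * \<sigma>" by simp
    qed
    have traj: "1 \<le> n \<Longrightarrow> infnorm (x n - y n) \<le> 6 * \<eta> * \<sigma>" for n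
    proof (induction n)
      case 0 then show ?case by simp
    next
      case (Suc n)
      show ?case
      proof (cases "n = 0")
        case True then show ?thesis using step1 by simp
      next
        case False
        have U: "Z2 i (Suc n) = Z1 i (Suc n)" for i using differ[of i "Suc n"] False by auto
        have "infnorm (x (Suc n) - y (Suc n)) \<le> infnorm (x n - y n)"
        proof -
          have R: "infnorm (closest_point (linf_ball c r) (x n - \<eta> *\<^sub>R robust_est B rs (\<lambda>i. qgrad gradf m (x n) (Z1 i (Suc n))) \<sigma>)
                  - closest_point (linf_ball c r) (y n - \<eta> *\<^sub>R robust_est B rs (\<lambda>i. qgrad gradf m (y n) (Z1 i (Suc n))) \<sigma>))
                 \<le> infnorm (x n - y n)"
            using robust_step[OF grad hessian convex smooth diagdom eta_pos etab m_pos B_pos rs less_imp_le[OF sig] r_nonneg,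
                where U="\<lambda>i. Z1 i (Suc n)" and c=c and y="x n" and x="y n"] .
          have xs: "x (Suc n) = closest_point (linf_ball c r) (x n - \<eta> *\<^sub>R robust_est B rs (\<lambda>i. qgrad gradf m (x n) (Z1 i (Suc n))) \<sigma>)"
            by (simp add: x_def Let_def)
          have ys: "y (Suc n) = closest_point (linf_ball c r) (y n - \<eta> *\<^sub>R robust_est B rs (\<lambda>i. qgrad gradf m (y n) (Z1 i (Suc n))) \<sigma>)"
            by (simp add: y_def U Let_def)
          show ?thesis unfolding xs ys using R .
        qed
        then show ?thesis using Suc False by simp
      qed
    qed
    have tt: "1 \<le> t - 1" using t by auto
    have D: "infnorm (x (t-1) - y (t-1)) \<le> 6 * \<eta> * \<sigma>" using traj[OF tt] .
    have Ut: "Z2 i t = Z1 i t" for i using differ[of i t] t by auto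
    have qd: "infnorm (Q1 i - Q2 i) \<le> \<beta> * (6 * \<eta> * \<sigma>)" for i
    proof -
      have "infnorm (Q1 i - Q2 i) \<le> \<beta> * infnorm (x (t-1) - y (t-1))"
        unfolding Q1_def Q2_def Ut by (rule infnorm_le_coords, rule q_lip[OF hessian smooth m_pos])
      also have "\<dots> \<le> \<beta> * (6 * \<eta> * \<sigma>)" using D beta_nonneg by (rule mult_left_mono)
      finally show ?thesis .
    qed
    have termb: "\<bar>exp (- \<tau> * infnorm (Q1 i - Q1 j)) - exp (- \<tau> * infnorm (Q2 i - Q2 j))\<bar> \<le> 12 * \<beta> * \<eta>" for i j
    proof -
      have "\<bar>infnorm (Q1 i - Q1 j) - infnorm (Q2 i - Q2 j)\<bar> \<le> infnorm ((Q1 i - Q1 j) - (Q2 i - Q2 j))"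
        by (rule absdiff_infnorm)
      also have "(Q1 i - Q1 j) - (Q2 i - Q2 j) = (Q1 i - Q2 i) + - (Q1 j - Q2 j)" by simp
      also have "infnorm \<dots> \<le> infnorm (Q1 i - Q2 i) + infnorm (- (Q1 j - Q2 j))" by (rule infnorm_triangle)
      also have "\<dots> \<le> 2 * (\<beta> * (6 * \<eta> * \<sigma>))" using qd[of i] qd[of j] infnorm_neg[of "Q1 j - Q2 j"] by linarith
      finally have a: "\<bar>infnorm (Q1 i - Q1 j) - infnorm (Q2 i - Q2 j)\<bar> \<le> 2 * (\<beta> * (6 * \<eta> * \<sigma>))" .
      have "\<bar>exp (- \<tau> * infnorm (Q1 i - Q1 j)) - exp (- \<tau> * infnorm (Q2 i - Q2 j))\<bar>
          \<le> \<tau> * \<bar>infnorm (Q1 i - Q1 j) - infnorm (Q2 i - Q2 j)\<bar>"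
        by (rule exp_lip) (use tau_pos infnorm_pos_le in auto)
      also have "\<dots> \<le> \<tau> * (2 * (\<beta> * (6 * \<eta> * \<sigma>)))" using a tau_pos by (intro mult_left_mono) auto
      also have "\<dots> = 12 * \<beta> * \<eta>" using tau_pos by (simp add: \<sigma>_def field_simps)
      finally show ?thesis .
    qed
    have "s1 - s2 = (1/real B) * (\<Sum>i\<in>{1..B}. \<Sum>j\<in>{1..B}.
        (exp (- \<tau> * infnorm (Q1 i - Q1 j)) - exp (- \<tau> * infnorm (Q2 i - Q2 j))))"
      by (simp add: s1_def s2_def sum_subtractf right_diff_distrib)
    also have "\<bar>\<dots>\<bar> \<le> (1/real B) * (\<Sum>i\<in>{1..B}. \<Sum>j\<in>{1..B}. 12 * \<beta> * \<eta>)"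
      unfolding abs_mult
    proof (rule mult_mono)
      show "\<bar>\<Sum>i\<in>{1..B}. \<Sum>j\<in>{1..B}.
        (exp (- \<tau> * infnorm (Q1 i - Q1 j)) - exp (- \<tau> * infnorm (Q2 i - Q2 j)))\<bar>
        \<le> (\<Sum>i\<in>{1..B}. \<Sum>j\<in>{1..B}. 12 * \<beta> * \<eta>)"
        by (rule order_trans[OF sum_abs], rule sum_mono, rule order_trans[OF sum_abs], rule sum_mono, rule termb)
    qed (use B_pos in auto)
    also have "\<dots> = 12 * \<beta> * \<eta> * real B" using B_pos by simp
    also have "\<dots> \<le> 2" using step by simp
    finally show ?thesis .
  qed
  then show "\<bar>s_stat gradf m B rs (linf_ball c r) \<eta> (1 / \<tau>) x0 Z1 t \<tau>
      - s_stat gradf m B rs (linf_ball c r) \<eta> (1 / \<tau>) x0 Z2 t \<tau>\<bar> \<le> 2"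
    using S1 S2 by simp
qed


end
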